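(* Let $G=\mathbb{Z}_2\times\mathbb{Z}_2\times\mathbb{Z}_2=\langle x_1\rangle\times\langle x_2\rangle\times\langle x_3\rangle$ and $\Phi(x_1^{i_1}x_2^{i_2}x_3^{i_3},x_1^{j_1}x_2^{j_2}x_3^{j_3},x_1^{k_1}x_2^{k_2}x_3^{k_3})=\prod_{l=1}^3(-1)^{i_l[\frac{j_l+k_l}{2}]}$ ($i_l,j_l,k_l\in\{0,1\}$). Let $\{\chi_1,\dots,\chi_N\}$, $N\ge3$, be an admissible series of quasi-characters of $G$ with respect to $\Phi$, where $\chi_i$ is associated to $\widetilde\Phi_{x_i}$ for elements $x_1,\dots,x_N\in G\setminus\{1\}$, the first three of which are the generators $x_1,x_2,x_3$. Then, after permuting the indices $4,\dots,N$, one of the following holds: (1) $3\le N\le6$ and $x_4,\dots,x_N$ are distinct elements of $\{x_1,x_2,x_3\}$; (2) $N\ge5$, $x_4=x_k$ for some $k\in\{1,2,3\}$, and writing $\{i,j\}=\{1,2,3\}\setminus\{k\}$, $\chi_i(x_i)=\chi_j(x_j)$ and $x_5=\cdots=x_N=x_ix_j$; (3) $N\ge4$ and there are $1\le i<j\le3$ with $x_4=\cdots=x_N=x_ix_j$ and $\chi_i(x_i)=\chi_j(x_j)$; (4) $N\ge4$, $x_4=x_1x_2x_3$, and there are $1\le i<j\le3$ with $x_5=\cdots=x_N=x_ix_j$ and $\chi_i(x_i)=\chi_j(x_j)$.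
   Context: $\mathbbm{k}$ algebraically closed of characteristic $0$; $[x]$ the integer part. $\widetilde\Phi_g(e,f)=\frac{\Phi(g,e,f)\Phi(e,f,g)}{\Phi(e,g,f)}$. A quasi-character associated to a 2-cocycle $\omega$ is $\chi:G\to\mathbbm{k}^*$ with $\chi(1)=1$ and $\chi(f)\chi(g)=\omega(f,g)\chi(fg)$. A series $\{\chi_1,\dots,\chi_N\}$ is admissible with respect to $\Phi$ if $\chi_i$ is associated to $\widetilde\Phi_{x_i}$ with $x_i\ne1$, $G=\langle x_1,\dots,x_N\rangle$, $\chi_i(x_j)\chi_j(x_i)=1$ for all $i\ne j$, and $\chi_i(x_i)\ne1$ for all $i$. (Given $\chi_1,\chi_2,\chi_3$, each $\chi_j$ with $j\ge4$ is determined by its degree $x_j$; the paper phrases conditions such as $x_j=x_k$, $x_j=x_ix_j'$ as equalities of quasi-characters $\chi_j=\chi'_k$, $\chi_j=\chi_{ij}$, $\chi_j=\chi_{123}$.) *)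

theory Defs
  imports "HOL-Computational_Algebra.Polynomial"
begin

text \<open>The group G = Z2 x Z2 x Z2, elements written x1^i1 x2^i2 x3^i3 with exponents
  encoded as booleans (True = exponent 1).\<close>
type_synonym G = "bool \<times> bool \<times> bool"

definition gmul :: "G \<Rightarrow> G \<Rightarrow> G" where
  "gmul a b = (case a of (a1, a2, a3) \<Rightarrow> case b of (b1, b2, b3) \<Rightarrow>
      (a1 \<noteq> b1, a2 \<noteq> b2, a3 \<noteq> b3))"

definition gone :: G where "gone = (False, False, False)"

definition gen1 :: G where "gen1 = (True, False, False)"
definition gen2 :: G where "gen2 = (False, True, False)"
definition gen3 :: G where "gen3 = (False, False, True)"

definition gexp :: "G \<Rightarrow> nat \<Rightarrow> nat" where
  "gexp g l = (case g of (a1, a2, a3) \<Rightarrow>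
      (if l = 1 then of_bool a1 else if l = 2 then of_bool a2 else of_bool a3))"

definition Phi :: "G \<Rightarrow> G \<Rightarrow> G \<Rightarrow> 'a::field" where
  "Phi a b c = (\<Prod>l\<in>{1,2,3::nat}. (-1) ^ (gexp a l * ((gexp b l + gexp c l) div 2)))"

definition Phitilde :: "(G \<Rightarrow> G \<Rightarrow> G \<Rightarrow> 'a::field) \<Rightarrow> G \<Rightarrow> G \<Rightarrow> G \<Rightarrow> 'a" where
  "Phitilde \<Phi> g e f = \<Phi> g e f * \<Phi> e f g / \<Phi> e g f"

definition quasi_char :: "(G \<Rightarrow> G \<Rightarrow> 'a::field) \<Rightarrow> (G \<Rightarrow> 'a) \<Rightarrow> bool" where
  "quasi_char \<omega> \<chi> \<longleftrightarrow> (\<forall>g. \<chi> g \<noteq> 0) \<and> \<chi> gone = 1 \<and>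
     (\<forall>f g. \<chi> f * \<chi> g = \<omega> f g * \<chi> (gmul f g))"

inductive_set gen_by :: "G set \<Rightarrow> G set" for S where
  gen_one: "gone \<in> gen_by S"
| gen_elem: "s \<in> S \<Longrightarrow> s \<in> gen_by S"
| gen_mul: "a \<in> gen_by S \<Longrightarrow> b \<in> gen_by S \<Longrightarrow> gmul a b \<in> gen_by S"

definition admissible ::
  "(G \<Rightarrow> G \<Rightarrow> G \<Rightarrow> 'a::field) \<Rightarrow> nat \<Rightarrow> (nat \<Rightarrow> G \<Rightarrow> 'a) \<Rightarrow> (nat \<Rightarrow> G) \<Rightarrow> bool" where
  "admissible \<Phi> N \<chi> x \<longleftrightarrow>
     (\<forall>i\<in>{1..N}. quasi_char (Phitilde \<Phi> (x i)) (\<chi> i) \<and> x i \<noteq> gone) \<and>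
     gen_by (x ` {1..N}) = UNIV \<and>
     (\<forall>i\<in>{1..N}. \<forall>j\<in>{1..N}. i \<noteq> j \<longrightarrow> \<chi> i (x j) * \<chi> j (x i) = 1) \<and>
     (\<forall>i\<in>{1..N}. \<chi> i (x i) \<noteq> 1)"

definition alg_closed :: "'a::field itself \<Rightarrow> bool" where
  "alg_closed _ \<longleftrightarrow> (\<forall>p :: 'a poly. degree p \<ge> 1 \<longrightarrow> (\<exists>z. poly p z = 0))"

end

theory Submission
  imports Defs
begin

definition tri :: "G \<Rightarrow> G \<Rightarrow> G \<Rightarrow> nat" where
 "tri a b c = (case a of (a1,a2,a3) \<Rightarrow> case b of (b1,b2,b3) \<Rightarrow> case c of (c1,c2,c3) \<Rightarrow>
   of_bool (a1\<and>b1\<and>c1) + of_bool (a2\<and>b2\<and>c2) + of_bool (a3\<and>b3\<and>c3))"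
lemma coord: "of_bool p * ((of_bool q + of_bool r) div 2) = (of_bool (p\<and>q\<and>r)::nat)"
  by (cases p; cases q; cases r) auto
lemma Phi_eq: "Phi a b c = (-1::'a::field) ^ tri a b c"
proof -
  obtain a1 a2 a3 b1 b2 b3 c1 c2 c3 where "a=(a1,a2,a3)" "b=(b1,b2,b3)" "c=(c1,c2,c3)"
    by (metis prod.exhaust)
  then show ?thesis unfolding Phi_def gexp_def tri_def by (simp add: coord power_add)
qed
lemma tri_sym: "tri e f g = tri g e f" "tri e g f = tri g e f"
  unfolding tri_def by (auto split: prod.splits)
lemma Phit: "Phitilde Phi g e f = (-1::'a::field) ^ tri g e f"
proof -
  have "(-1::'a) ^ tri g e f \<noteq> 0" by simp
  then show ?thesis unfolding Phitilde_def Phi_eq tri_sym(1)[of e f g] tri_sym(2)[of e g f] by (cases "even (tri g e f)") simp_all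
qed

definition pr3 :: "G \<Rightarrow> 'a::field \<Rightarrow> 'a \<Rightarrow> 'a \<Rightarrow> 'a" where
 "pr3 g a b c = (case g of (g1,g2,g3) \<Rightarrow> (if g1 then a else 1)*(if g2 then b else 1)*(if g3 then c else 1))"

lemma qc_expand:
  assumes "quasi_char (Phitilde Phi g) (\<chi>::G\<Rightarrow>'a::field)"
  shows "\<chi> h = pr3 h (\<chi> gen1) (\<chi> gen2) (\<chi> gen3)"
proof -
  have m: "\<chi> f * \<chi> k = (-1) ^ tri g f k * \<chi> (gmul f k)" for f k
    using assms unfolding quasi_char_def Phit by blast
  have o: "\<chi> gone = 1" using assms unfolding quasi_char_def by blast
  have 12: "\<chi> (True,True,False) = \<chi> gen1 * \<chi> gen2"
    using m[of gen1 gen2] by (cases g) (simp add: tri_def gen1_def gen2_def gmul_def)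
  have 13: "\<chi> (True,False,True) = \<chi> gen1 * \<chi> gen3"
    using m[of gen1 gen3] by (cases g) (simp add: tri_def gen1_def gen3_def gmul_def)
  have 23: "\<chi> (False,True,True) = \<chi> gen2 * \<chi> gen3"
    using m[of gen2 gen3] by (cases g) (simp add: tri_def gen3_def gen2_def gmul_def)
  have 123: "\<chi> (True,True,True) = \<chi> gen1 * \<chi> gen2 * \<chi> gen3"
    using m[of "(True,True,False)" gen3] 12 by (cases g) (simp add: tri_def gen3_def gmul_def)
  obtain a b c where h: "h = (a,b,c)" by (metis prod.exhaust)
  show ?thesis unfolding h pr3_def
    by (cases a; cases b; cases c) (auto simp: 12 13 23 123 o[unfolded gone_def] gen1_def gen2_def gen3_def)
qed

lemma qc_sq:
  assumes "quasi_char (Phitilde Phi g) (\<chi>::G\<Rightarrow>'a::field)"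
  shows "\<chi> f * \<chi> f = (-1) ^ tri g f f"
proof -
  have m: "\<chi> f * \<chi> k = (-1) ^ tri g f k * \<chi> (gmul f k)" for f k
    using assms unfolding quasi_char_def Phit by blast
  have o: "\<chi> gone = 1" using assms unfolding quasi_char_def by blast
  have "gmul f f = gone" by (cases f) (simp add: gmul_def gone_def)
  then show ?thesis using m[of f f] o by simp
qed

lemma core:
  fixes u1 u2 u3 s12 s13 s23 :: "'a::field"
  assumes "u1*u1 = -1" "u2*u2 = -1" "u3*u3 = -1" "s12 \<noteq> 0" "s13 \<noteq> 0" "s23 \<noteq> 0"
  shows "pr3 h (inverse (pr3 g u1 s12 s13)) (inverse (pr3 g (inverse s12) u2 s23)) (inverse (pr3 g (inverse s13) (inverse s23) u3)) *
         pr3 g (inverse (pr3 h u1 s12 s13)) (inverse (pr3 h (inverse s12) u2 s23)) (inverse (pr3 h (inverse s13) (inverse s23) u3))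
       = (-1) ^ tri h g (True,True,True)"
proof -
  have n: "u1 \<noteq> 0" "u2 \<noteq> 0" "u3 \<noteq> 0" using assms(1-3) by auto
  obtain a b c where h: "h = (a,b,c)" by (metis prod.exhaust)
  obtain d e f where g: "g = (d,e,f)" by (metis prod.exhaust)
  show ?thesis unfolding h g pr3_def tri_def
    by (cases a; cases b; cases c; cases d; cases e; cases f) (simp_all add: n assms field_simps)
qed


lemma selfl:
  fixes u1 u2 u3 s12 s13 s23 :: "'a::field"
  assumes "u1 \<noteq> 0" "u2 \<noteq> 0" "u3 \<noteq> 0" "s12 \<noteq> 0" "s13 \<noteq> 0" "s23 \<noteq> 0"
  shows "pr3 g (inverse (pr3 g u1 s12 s13)) (inverse (pr3 g (inverse s12) u2 s23)) (inverse (pr3 g (inverse s13) (inverse s23) u3))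
       = inverse (pr3 g u1 u2 u3)"
proof -
  obtain d e f where g: "g = (d,e,f)" by (metis prod.exhaust)
  show ?thesis unfolding g pr3_def
    by (cases d; cases e; cases f) (simp_all add: assms field_simps)
qed

lemma sq_cases: fixes u v :: "'a::field" assumes "u*u = v*v" shows "u = v \<or> u = -v"
proof -
  have "(u - v) * (u + v) = 0" using assms by (simp add: algebra_simps)
  then show ?thesis by (auto simp: eq_neg_iff_add_eq_0)
qed

lemma sq_eq: fixes u v :: "'a::field" assumes "u*u = -1" "v*v = -1" "u*v \<noteq> 1" shows "u = v"
  using sq_cases[of u v] assms by auto

lemma pigeon: fixes u1 u2 u3 :: "'a::field" assumes "u1*u1 = -1" "u2*u2 = -1" "u3*u3 = -1"
  shows "u1 = u2 \<or> u1 = u3 \<or> u2 = u3"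
  using sq_cases[of u2 u1] sq_cases[of u3 u1] assms by auto

definition w1 :: "G \<Rightarrow> bool" where "w1 g \<longleftrightarrow> g \<in> {(True,False,False),(False,True,False),(False,False,True)}"
definition w2 :: "G \<Rightarrow> bool" where "w2 g \<longleftrightarrow> g \<in> {(True,True,False),(True,False,True),(False,True,True)}"

lemma wcases: "g \<noteq> gone \<Longrightarrow> w1 g \<or> w2 g \<or> g = (True,True,True)"
  unfolding w1_def w2_def gone_def by (cases g) auto
lemma c_w3: "even (tri g h (True,True,True)) \<Longrightarrow> g = (True,True,True) \<Longrightarrow> h \<noteq> gone \<Longrightarrow> w2 h"
  unfolding w2_def gone_def tri_def by (cases h) auto
lemma c_22: "w2 g \<Longrightarrow> w2 h \<Longrightarrow> even (tri g h (True,True,True)) \<Longrightarrow> g = h"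
  unfolding w2_def tri_def by auto
lemma c_11: "w1 g \<Longrightarrow> w1 h \<Longrightarrow> even (tri g h (True,True,True)) \<Longrightarrow> g \<noteq> h"
  unfolding w1_def tri_def by auto
lemma c_12: "w1 g \<Longrightarrow> w2 h \<Longrightarrow> even (tri g h (True,True,True)) \<Longrightarrow> gmul g h = (True,True,True)"
  unfolding w1_def w2_def tri_def gmul_def by auto
lemma c_21: "w2 g \<Longrightarrow> w1 h \<Longrightarrow> even (tri g h (True,True,True)) \<Longrightarrow> gmul h g = (True,True,True)"
  unfolding w1_def w2_def tri_def gmul_def by auto
lemma c_13: "w1 g \<Longrightarrow> h = (True,True,True) \<Longrightarrow> \<not> even (tri g h (True,True,True))"
  unfolding w1_def tri_def by auto

lemma swap_bij: assumes "a \<in> A" "b \<in> A"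
  shows "bij_betw (\<lambda>l. if l = a then b else if l = b then a else l) A A"
  by (rule bij_betw_byWitness[where f' = "\<lambda>l. if l = a then b else if l = b then a else l"]) (use assms in auto)

lemma neg1pow: "(-1::'a::field_char_0) ^ n = 1 \<Longrightarrow> even n"
  by (metis neg_one_odd_power one_neq_neg_one)



theorem proposition5p6:
  fixes N :: nat and \<chi> :: "nat \<Rightarrow> G \<Rightarrow> 'a::field_char_0" and x :: "nat \<Rightarrow> G"
  assumes "alg_closed TYPE('a)"
    and "N \<ge> 3"
    and "admissible Phi N \<chi> x"
    and "x 1 = gen1" and "x 2 = gen2" and "x 3 = gen3"
  shows "\<exists>\<sigma>. bij_betw \<sigma> {4..N} {4..N} \<and>
    ((N \<le> 6 \<and> inj_on (\<lambda>l. x (\<sigma> l)) {4..N} \<and> (\<forall>l\<in>{4..N}. x (\<sigma> l) \<in> {x 1, x 2, x 3}))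
   \<or> (N \<ge> 5 \<and> (\<exists>k\<in>{1,2,3}. x (\<sigma> 4) = x k \<and>
        (\<exists>i j. i \<noteq> j \<and> {i, j} = {1,2,3} - {k} \<and> \<chi> i (x i) = \<chi> j (x j) \<and>
           (\<forall>l\<in>{5..N}. x (\<sigma> l) = gmul (x i) (x j)))))
   \<or> (N \<ge> 4 \<and> (\<exists>i j. 1 \<le> i \<and> i < j \<and> j \<le> 3 \<and>
        (\<forall>l\<in>{4..N}. x (\<sigma> l) = gmul (x i) (x j)) \<and> \<chi> i (x i) = \<chi> j (x j)))
   \<or> (N \<ge> 4 \<and> x (\<sigma> 4) = gmul (gmul (x 1) (x 2)) (x 3) \<and>
        (\<exists>i j. 1 \<le> i \<and> i < j \<and> j \<le> 3 \<and>
        (\<forall>l\<in>{5..N}. x (\<sigma> l) = gmul (x i) (x j)) \<and> \<chi> i (x i) = \<chi> j (x j))))"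
   (is "\<exists>\<sigma>. ?B \<sigma> \<and> (?D1 \<sigma> \<or> ?D2 \<sigma> \<or> ?D3 \<sigma> \<or> ?D4 \<sigma>)")
proof -
  note adm = assms(3)[unfolded admissible_def]
  have qc: "i \<in> {1..N} \<Longrightarrow> quasi_char (Phitilde Phi (x i)) (\<chi> i)" for i using adm by blast
  have ng: "i \<in> {1..N} \<Longrightarrow> x i \<noteq> gone" for i using adm by blast
  have pr: "i \<in> {1..N} \<Longrightarrow> j \<in> {1..N} \<Longrightarrow> i \<noteq> j \<Longrightarrow> \<chi> i (x j) * \<chi> j (x i) = 1" for i j
    using adm by blast
  have sf: "i \<in> {1..N} \<Longrightarrow> \<chi> i (x i) \<noteq> 1" for i using adm by blast
  have nz: "i \<in> {1..N} \<Longrightarrow> \<chi> i g \<noteq> 0" for i g using qc[of i] unfolding quasi_char_def by blast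
  have i1: "(1::nat) \<in> {1..N}" and i2: "(2::nat) \<in> {1..N}" and i3: "(3::nat) \<in> {1..N}" using assms(2) by auto
  define u1 where "u1 = \<chi> 1 gen1"
  define u2 where "u2 = \<chi> 2 gen2"
  define u3 where "u3 = \<chi> 3 gen3"
  define s12 where "s12 = \<chi> 1 gen2"
  define s13 where "s13 = \<chi> 1 gen3"
  define s23 where "s23 = \<chi> 2 gen3"
  have uu1: "u1*u1 = -1" using qc_sq[OF qc[OF i1], of gen1] assms(4) by (simp add: u1_def tri_def gen1_def)
  have uu2: "u2*u2 = -1" using qc_sq[OF qc[OF i2], of gen2] assms(5) by (simp add: u2_def tri_def gen2_def)
  have uu3: "u3*u3 = -1" using qc_sq[OF qc[OF i3], of gen3] assms(6) by (simp add: u3_def tri_def gen3_def)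
  have nzs: "s12 \<noteq> 0" "s13 \<noteq> 0" "s23 \<noteq> 0" "u1 \<noteq> 0" "u2 \<noteq> 0" "u3 \<noteq> 0"
    unfolding s12_def s13_def s23_def u1_def u2_def u3_def using nz i1 i2 i3 by auto
  have inv: "\<chi> j (x i) = inverse (\<chi> i (x j))" if "i \<in> {1..N}" "j \<in> {1..N}" "i \<noteq> j" for i j
    using pr[OF that] nz[OF that(1)] by (simp add: field_simps)
  have s21: "\<chi> 2 gen1 = inverse s12" using inv[OF i1 i2] assms(4-6) by (simp add: s12_def)
  have s31: "\<chi> 3 gen1 = inverse s13" using inv[OF i1 i3] assms(4-6) by (simp add: s13_def)
  have s32: "\<chi> 3 gen2 = inverse s23" using inv[OF i2 i3] assms(4-6) by (simp add: s23_def)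
  have row1: "\<chi> 1 g = pr3 g u1 s12 s13" for g
    unfolding u1_def s12_def s13_def by (rule qc_expand[OF qc[OF i1]])
  have row2: "\<chi> 2 g = pr3 g (inverse s12) u2 s23" for g
    by (subst qc_expand[OF qc[OF i2]]) (simp add: s21 u2_def s23_def)
  have row3: "\<chi> 3 g = pr3 g (inverse s13) (inverse s23) u3" for g
    by (subst qc_expand[OF qc[OF i3]]) (simp add: s31 s32 u3_def)
  have chiq: "\<chi> q h = pr3 h (inverse (pr3 (x q) u1 s12 s13)) (inverse (pr3 (x q) (inverse s12) u2 s23))
       (inverse (pr3 (x q) (inverse s13) (inverse s23) u3))" if "q \<in> {4..N}" for q h
  proof -
    have q: "q \<in> {1..N}" "q \<noteq> 1" "q \<noteq> 2" "q \<noteq> 3" using that by auto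
    show ?thesis using qc_expand[OF qc[OF q(1)], of h] inv[OF i1 q(1)] inv[OF i2 q(1)] inv[OF i3 q(1)] q
      assms(4-6) row1 row2 row3 by auto
  qed
  have P: "even (tri (x r) (x q) (True,True,True))" if "q \<in> {4..N}" "r \<in> {4..N}" "q \<noteq> r" for q r
  proof -
    have "\<chi> q (x r) * \<chi> r (x q) = 1" using pr[of q r] that by auto
    then have "(-1::'a) ^ tri (x r) (x q) (True,True,True) = 1"
      unfolding chiq[OF that(1)] chiq[OF that(2)] core[OF uu1 uu2 uu3 nzs(1-3)] .
    then show ?thesis by (rule neg1pow)
  qed
  have Sp: "pr3 (x q) u1 u2 u3 \<noteq> 1" if "q \<in> {4..N}" for q
  proof -
    have "\<chi> q (x q) \<noteq> 1" using sf[of q] that by auto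
    then have "inverse (pr3 (x q) u1 u2 u3) \<noteq> 1"
      unfolding chiq[OF that(1)] selfl[OF nzs(4-6) nzs(1-3)] .
    then show ?thesis by auto
  qed
  have c1: "\<chi> 1 (x 1) = u1" "\<chi> 2 (x 2) = u2" "\<chi> 3 (x 3) = u3"
    using assms(4-6) by (auto simp: u1_def u2_def u3_def)
  have pairs: "\<exists>i j. 1 \<le> i \<and> i < j \<and> j \<le> 3 \<and> x q = gmul (x i) (x j) \<and> \<chi> i (x i) = \<chi> j (x j)"
    if "q \<in> {4..N}" "w2 (x q)" for q
  proof -
    have "x q = (True,True,False) \<or> x q = (True,False,True) \<or> x q = (False,True,True)"
      using that(2) unfolding w2_def by auto
    then show ?thesis
    proof (elim disjE)
      assume h: "x q = (True,True,False)"
      then have "u1 = u2" using Sp[OF that(1)] sq_eq[OF uu1 uu2] by (simp add: pr3_def)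
      then show ?thesis using h c1 assms(4-6)
        by (intro exI[of _ 1] exI[of _ 2]) (simp add: gmul_def gen1_def gen2_def)
    next
      assume h: "x q = (True,False,True)"
      then have "u1 = u3" using Sp[OF that(1)] sq_eq[OF uu1 uu3] by (simp add: pr3_def)
      then show ?thesis using h c1 assms(4-6)
        by (intro exI[of _ 1] exI[of _ 3]) (simp add: gmul_def gen1_def gen3_def)
    next
      assume h: "x q = (False,True,True)"
      then have "u2 = u3" using Sp[OF that(1)] sq_eq[OF uu2 uu3] by (simp add: pr3_def)
      then show ?thesis using h c1 assms(4-6)
        by (intro exI[of _ 2] exI[of _ 3]) (simp add: gmul_def gen2_def gen3_def)
    qed
  qed
  have case2: "\<exists>k\<in>{1,2,3}. x q0 = x k \<and> (\<exists>i j. i \<noteq> j \<and> {i, j} = {1,2,3} - {k} \<and> \<chi> i (x i) = \<chi> j (x j)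
      \<and> x q1 = gmul (x i) (x j))"
    if h: "q1 \<in> {4..N}" "w2 (x q1)" "w1 (x q0)" "gmul (x q0) (x q1) = (True,True,True)" for q0 q1
  proof -
    have gsol: "g = gmul k (True,True,True)" if "gmul g k = (True,True,True)" for g k :: G
      using that by (cases g; cases k) (auto simp: gmul_def)
    obtain i j where ij: "1 \<le> i" "i < j" "j \<le> 3" "x q1 = gmul (x i) (x j)" "\<chi> i (x i) = \<chi> j (x j)"
      using pairs[OF h(1,2)] by blast
    have "(i = 1 \<and> j = 2) \<or> (i = 1 \<and> j = 3) \<or> (i = 2 \<and> j = 3)" using ij by auto
    then show ?thesis
    proof (elim disjE)
      assume hh: "i = 1 \<and> j = 2"
      then have "x q0 = x 3" using hh ij assms(4-6)
        using gsol[OF h(4)] by (simp add: gmul_def gen1_def gen2_def gen3_def)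
      then show ?thesis using hh ij by (intro bexI[of _ 3] conjI exI[of _ i] exI[of _ j]) auto
    next
      assume hh: "i = 1 \<and> j = 3"
      then have "x q0 = x 2" using hh ij assms(4-6)
        using gsol[OF h(4)] by (simp add: gmul_def gen1_def gen2_def gen3_def)
      then show ?thesis using hh ij by (intro bexI[of _ 2] conjI exI[of _ i] exI[of _ j]) auto
    next
      assume hh: "i = 2 \<and> j = 3"
      then have "x q0 = x 1" using hh ij assms(4-6)
        using gsol[OF h(4)] by (simp add: gmul_def gen1_def gen2_def gen3_def)
      then show ?thesis using hh ij by (intro bexI[of _ 1] conjI exI[of _ i] exI[of _ j]) auto
    qed
  qed
  have wc: "w1 (x q) \<or> w2 (x q) \<or> x q = (True,True,True)" if "q \<in> {4..N}" for q
    using wcases ng[of q] that by auto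
  have T: "gmul (gmul (x 1) (x 2)) (x 3) = (True,True,True)"
    using assms(4-6) by (simp add: gmul_def gen1_def gen2_def gen3_def)
  have canc: "a = b" if "gmul a c = (True,True,True)" "gmul b c = (True,True,True)" for a b c :: G
    using that by (cases a; cases b; cases c) (auto simp: gmul_def)
  show ?thesis
  proof (cases "\<exists>q0\<in>{4..N}. x q0 = (True,True,True)")
    case True
    then obtain q0 where q0: "q0 \<in> {4..N}" "x q0 = (True,True,True)" by blast
    have oth: "w2 (x r)" if "r \<in> {4..N}" "r \<noteq> q0" for r
      using c_w3[OF P[of r q0] q0(2)] that q0 ng[of r] by auto
    obtain i j where ij: "1 \<le> i" "i < j" "j \<le> 3" "\<chi> i (x i) = \<chi> j (x j)"
      "\<forall>r\<in>{4..N}. r \<noteq> q0 \<longrightarrow> x r = gmul (x i) (x j)"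
    proof (cases "\<exists>r\<in>{4..N}. r \<noteq> q0")
      case True
      then obtain r where r: "r \<in> {4..N}" "r \<noteq> q0" by blast
      obtain i j where ij: "1 \<le> i" "i < j" "j \<le> 3" "x r = gmul (x i) (x j)" "\<chi> i (x i) = \<chi> j (x j)"
        using pairs[OF r(1) oth[OF r]] by blast
      have "\<forall>r'\<in>{4..N}. r' \<noteq> q0 \<longrightarrow> x r' = gmul (x i) (x j)"
      proof (intro ballI impI)
        fix r' assume "r' \<in> {4..N}" "r' \<noteq> q0"
        then show "x r' = gmul (x i) (x j)"
          using ij(4) c_22[OF oth[OF r] oth, of r', OF _ _ P[of r' r]] r by (cases "r' = r") auto
      qed
      then show ?thesis using that ij by blast
    next
      case False
      then have V: "\<forall>r\<in>{4..N}. r \<noteq> q0 \<longrightarrow> x r = gmul (x i) (x j)" for i j by blast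
      have c1s: "\<chi> (Suc 0) (x (Suc 0)) = u1" using c1(1) by simp
      from pigeon[OF uu1 uu2 uu3] show ?thesis
      proof (elim disjE)
        assume "u1 = u2" then have "\<chi> 1 (x 1) = \<chi> 2 (x 2)" using c1 by metis
        then show ?thesis by (intro that[of 1 2] V) auto
      next
        assume "u1 = u3" then have "\<chi> 1 (x 1) = \<chi> 3 (x 3)" using c1 by metis
        then show ?thesis by (intro that[of 1 3] V) auto
      next
        assume "u2 = u3" then have "\<chi> 2 (x 2) = \<chi> 3 (x 3)" using c1 by metis
        then show ?thesis by (intro that[of 2 3] V) auto
      qed
    qed
    define \<sigma> where "\<sigma> = (\<lambda>l::nat. if l = 4 then q0 else if l = q0 then 4 else l)"
    have b: "?B \<sigma>" unfolding \<sigma>_def by (rule swap_bij) (use q0 in auto)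
    have d4: "?D4 \<sigma>"
    proof -
      have "x (\<sigma> l) = gmul (x i) (x j)" if "l \<in> {5..N}" for l
        using ij(5) that q0(1) unfolding \<sigma>_def by auto
      then show ?thesis using q0 T ij unfolding \<sigma>_def by auto
    qed
    show ?thesis by (rule exI[of _ \<sigma>], rule conjI[OF b], rule disjI2, rule disjI2, rule disjI2, rule d4)
  next
    case noT: False
    show ?thesis
    proof (cases "\<exists>q1\<in>{4..N}. w2 (x q1)")
      case True
      then obtain q1 where q1: "q1 \<in> {4..N}" "w2 (x q1)" by blast
      have same: "x r = x q1" if "r \<in> {4..N}" "w2 (x r)" for r
        using c_22[OF that(2) q1(2) P[of q1 r]] that q1 by (cases "r = q1") auto
      show ?thesis
      proof (cases "\<exists>q0\<in>{4..N}. w1 (x q0)")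
        case True
        then obtain q0 where q0: "q0 \<in> {4..N}" "w1 (x q0)" by blast
        have q01: "q0 \<noteq> q1" using q0 q1 unfolding w1_def w2_def by auto
        have g01: "gmul (x q0) (x q1) = (True,True,True)" using c_12[OF q0(2) q1(2) P[of q1 q0]] q01 q0 q1 by auto
        have oth: "x r = x q1" if "r \<in> {4..N}" "r \<noteq> q0" for r
        proof -
          have "\<not> w1 (x r)"
          proof
            assume w: "w1 (x r)"
            have "r \<noteq> q1" using w q1 unfolding w1_def w2_def by auto
            then have "gmul (x r) (x q1) = (True,True,True)" using c_12[OF w q1(2) P[of q1 r]] that q1 by auto
            then have "x r = x q0" using canc g01 by blast
            then show False using c_11[OF w q0(2) P[of q0 r]] that q0 by auto
          qed
          then show ?thesis using wc[OF that(1)] noT that same by auto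
        qed
        define \<sigma> where "\<sigma> = (\<lambda>l::nat. if l = 4 then q0 else if l = q0 then 4 else l)"
        have b: "?B \<sigma>" unfolding \<sigma>_def by (rule swap_bij) (use q0 in auto)
        have d2: "?D2 \<sigma>"
        proof -
          have N5: "N \<ge> 5" using q0 q1 q01 by auto
          have xl: "x (\<sigma> l) = x q1" if "l \<in> {5..N}" for l
            using oth that q0(1) unfolding \<sigma>_def by auto
          have x4: "x (\<sigma> 4) = x q0" unfolding \<sigma>_def by simp
          obtain k i j where k: "k \<in> {1,2,3}" "x q0 = x k" "i \<noteq> j" "{i, j} = {1,2,3} - {k}"
            "\<chi> i (x i) = \<chi> j (x j)" "x q1 = gmul (x i) (x j)"
            using case2[OF q1 q0(2) g01] by (elim bexE exE conjE) (rule that, assumption+)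
          show ?thesis
            apply (rule conjI[OF N5])
            apply (rule bexI[OF _ k(1)])
            apply (rule conjI)
             apply (simp add: x4 k(2))
            apply (rule exI[of _ i], rule exI[of _ j])
            using k xl by auto
        qed
        show ?thesis by (rule exI[of _ \<sigma>], rule conjI[OF b], rule disjI2, rule disjI1, rule d2)
      next
        case False
        obtain i j where ij: "1 \<le> i" "i < j" "j \<le> 3" "x q1 = gmul (x i) (x j)" "\<chi> i (x i) = \<chi> j (x j)"
          using pairs[OF q1] by blast
        have allp: "\<forall>l\<in>{4..N}. x (id l) = gmul (x i) (x j)"
        proof
          fix l assume l: "l \<in> {4..N}"
          have "w2 (x l)" using wc[OF l] noT False l by auto
          then show "x (id l) = gmul (x i) (x j)" using same[OF l] ij(4) by simp
        qed
        have d3: "?D3 id"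
          apply (rule conjI)
          using q1(1) apply simp
          apply (rule exI[of _ i], rule exI[of _ j])
          using ij allp by simp
        show ?thesis by (rule exI[of _ id], rule conjI[OF bij_betw_id], rule disjI2, rule disjI2, rule disjI1, rule d3)
      qed
    next
      case False
      then have all1: "w1 (x q)" if "q \<in> {4..N}" for q using wc[OF that] noT that by auto
      have inj: "inj_on x {4..N}"
      proof (rule inj_onI, rule ccontr)
        fix a b assume ab: "a \<in> {4..N}" "b \<in> {4..N}" "x a = x b" "a \<noteq> b"
        show False using c_11[OF all1[OF ab(2)] all1[OF ab(1)] P[OF ab(1,2,4)]] ab(3) by simp
      qed
      have sub: "x ` {4..N} \<subseteq> {x 1, x 2, x 3}"
      proof (rule image_subsetI)
        fix q assume "q \<in> {4..N}"
        then have "w1 (x q)" by (rule all1)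
        then show "x q \<in> {x 1, x 2, x 3}" using assms(4-6) unfolding w1_def gen1_def gen2_def gen3_def by simp
      qed
      have c3: "card {x 1, x 2, x 3} = 3" using assms(4-6) by (simp add: gen1_def gen2_def gen3_def)
      have "card {4..N} \<le> 3"
        using card_inj_on_le[OF inj sub] c3 by simp
      then have "N \<le> 6" by simp
      then have d1: "?D1 id" using inj sub by auto
      show ?thesis by (rule exI[of _ id], rule conjI[OF bij_betw_id], rule disjI1, rule d1)
    qed
  qed
qed
end
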